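(* If $G_1$ and $G_2$ are vertex-disjoint semi-weakly CIS graphs, then their disjoint union $G_1+G_2$ and their join $G_1*G_2$ are also semi-weakly CIS.
   Context: A strong clique of a graph is a clique meeting every maximal stable set. A graph is semi-weakly CIS if it admits a family of strong cliques such that every two adjacent vertices lie together in some member of the family. The join $G_1*G_2$ is obtained from $G_1+G_2$ by adding all edges between $V(G_1)$ and $V(G_2)$. *)

theory Defs
  imports Main
begin

definition graph :: "'a set \<Rightarrow> 'a set set \<Rightarrow> bool" where
  "graph V E \<longleftrightarrow> finite V \<and> (\<forall>e\<in>E. e \<subseteq> V \<and> card e = 2)"

definition clique :: "'a set \<Rightarrow> 'a set set \<Rightarrow> 'a set \<Rightarrow> bool" where
  "clique V E C \<longleftrightarrow> C \<subseteq> V \<and> (\<forall>u\<in>C. \<forall>v\<in>C. u \<noteq> v \<longrightarrow> {u, v} \<in> E)"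

definition stable_set :: "'a set \<Rightarrow> 'a set set \<Rightarrow> 'a set \<Rightarrow> bool" where
  "stable_set V E S \<longleftrightarrow> S \<subseteq> V \<and> (\<forall>u\<in>S. \<forall>v\<in>S. {u, v} \<notin> E)"

definition maximal_stable_set :: "'a set \<Rightarrow> 'a set set \<Rightarrow> 'a set \<Rightarrow> bool" where
  "maximal_stable_set V E S \<longleftrightarrow> stable_set V E S \<and>
     (\<forall>T. stable_set V E T \<and> S \<subseteq> T \<longrightarrow> T = S)"

definition strong_clique :: "'a set \<Rightarrow> 'a set set \<Rightarrow> 'a set \<Rightarrow> bool" where
  "strong_clique V E C \<longleftrightarrow> clique V E C \<and>
     (\<forall>S. maximal_stable_set V E S \<longrightarrow> C \<inter> S \<noteq> {})"

definition semi_weakly_CIS :: "'a set \<Rightarrow> 'a set set \<Rightarrow> bool" where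
  "semi_weakly_CIS V E \<longleftrightarrow> (\<exists>\<C>. (\<forall>C\<in>\<C>. strong_clique V E C) \<and>
     (\<forall>u v. {u, v} \<in> E \<longrightarrow> (\<exists>C\<in>\<C>. u \<in> C \<and> v \<in> C)))"

definition join_edges :: "'a set \<Rightarrow> 'a set set \<Rightarrow> 'a set \<Rightarrow> 'a set set \<Rightarrow> 'a set set" where
  "join_edges V1 E1 V2 E2 = E1 \<union> E2 \<union> {{u, v} | u v. u \<in> V1 \<and> v \<in> V2}"

end

theory Submission
  imports Defs
begin

lemma edge_sub: "graph V E \<Longrightarrow> {u,v} \<in> E \<Longrightarrow> u \<in> V \<and> v \<in> V"
  unfolding graph_def by blast

lemma edge_neq: "graph V E \<Longrightarrow> {u,v} \<in> E \<Longrightarrow> u \<noteq> v"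
  unfolding graph_def by fastforce

lemma vertex_strong:
  assumes g: "graph V E" and s: "semi_weakly_CIS V E" and u: "u \<in> V"
  shows "\<exists>C. strong_clique V E C \<and> u \<in> C"
proof (cases "\<exists>v. {u,v} \<in> E")
  case True
  then obtain v where "{u,v} \<in> E" by blast
  with s show ?thesis unfolding semi_weakly_CIS_def by blast
next
  case False
  hence iso: "{u,v} \<notin> E" for v by blast
  have iso2: "{v,u} \<notin> E" for v using iso[of v] by (simp add: insert_commute)
  have "strong_clique V E {u}"
    unfolding strong_clique_def clique_def
  proof (intro conjI allI impI)
    show "{u} \<subseteq> V" using u by simp
    show "\<forall>x\<in>{u}. \<forall>y\<in>{u}. x \<noteq> y \<longrightarrow> {x, y} \<in> E" by simp
    fix S assume m: "maximal_stable_set V E S"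
    have st: "stable_set V E S" and mx: "\<And>T. stable_set V E T \<Longrightarrow> S \<subseteq> T \<Longrightarrow> T = S"
      using m unfolding maximal_stable_set_def by auto
    have SV: "S \<subseteq> V" and Sst: "\<And>x y. x \<in> S \<Longrightarrow> y \<in> S \<Longrightarrow> {x,y} \<notin> E"
      using st unfolding stable_set_def by auto
    have "stable_set V E (insert u S)"
      unfolding stable_set_def
    proof (intro conjI ballI)
      show "insert u S \<subseteq> V" using SV u by simp
      fix x y assume x: "x \<in> insert u S" and y: "y \<in> insert u S"
      show "{x,y} \<notin> E"
      proof (cases "x = u")
        case True
        then show ?thesis using iso by simp
      next
        case xn: False
        show ?thesis
        proof (cases "y = u")
          case True
          then show ?thesis using iso2 by simp
        next
          case False
          then show ?thesis using x y xn Sst by simp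
        qed
      qed
    qed
    hence "insert u S = S" using mx by blast
    thus "{u} \<inter> S \<noteq> {}" by blast
  qed
  thus ?thesis by blast
qed

lemma cross_not_edge:
  assumes g1: "graph V1 E1" and g2: "graph V2 E2" and d: "V1 \<inter> V2 = {}"
    and x: "x \<in> V1" and y: "y \<in> V2"
  shows "{x,y} \<notin> E1 \<union> E2"
proof
  assume "{x,y} \<in> E1 \<union> E2"
  then show False
  proof
    assume "{x,y} \<in> E1"
    hence "y \<in> V1" using edge_sub[OF g1] by blast
    thus False using y d by blast
  next
    assume "{x,y} \<in> E2"
    hence "x \<in> V2" using edge_sub[OF g2] by blast
    thus False using x d by blast
  qed
qed

lemma union_max:
  assumes g1: "graph V1 E1" and g2: "graph V2 E2" and d: "V1 \<inter> V2 = {}"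
    and m: "maximal_stable_set (V1 \<union> V2) (E1 \<union> E2) S"
  shows "maximal_stable_set V1 E1 (S \<inter> V1)"
proof -
  have st: "stable_set (V1 \<union> V2) (E1 \<union> E2) S" using m unfolding maximal_stable_set_def by blast
  have SV: "S \<subseteq> V1 \<union> V2" and Sst: "\<forall>u\<in>S. \<forall>v\<in>S. {u, v} \<notin> E1 \<union> E2"
    using st unfolding stable_set_def by blast+
  have st1: "stable_set V1 E1 (S \<inter> V1)" using SV Sst unfolding stable_set_def by blast
  moreover have "\<forall>T. stable_set V1 E1 T \<and> S \<inter> V1 \<subseteq> T \<longrightarrow> T = S \<inter> V1"
  proof (intro allI impI)
    fix T assume T: "stable_set V1 E1 T \<and> S \<inter> V1 \<subseteq> T"
    have TV: "T \<subseteq> V1" and Tst: "\<forall>u\<in>T. \<forall>v\<in>T. {u, v} \<notin> E1"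
      using T unfolding stable_set_def by blast+
    have Tst2: "{u, v} \<notin> E2" if "u \<in> T" for u v
    proof
      assume "{u,v} \<in> E2"
      hence "u \<in> V2" using edge_sub[OF g2] by blast
      thus False using that TV d by blast
    qed
    have "stable_set (V1 \<union> V2) (E1 \<union> E2) (T \<union> (S \<inter> V2))"
      unfolding stable_set_def
    proof (intro conjI ballI)
      show "T \<union> S \<inter> V2 \<subseteq> V1 \<union> V2" using TV by blast
      fix x y assume x: "x \<in> T \<union> S \<inter> V2" and y: "y \<in> T \<union> S \<inter> V2"
      show "{x, y} \<notin> E1 \<union> E2"
      proof (cases "x \<in> T")
        case xT: True
        show ?thesis
        proof (cases "y \<in> T")
          case True
          then show ?thesis using xT Tst Tst2 by blast
        next
          case False
          hence "y \<in> V2" using y by blast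
          moreover have "x \<in> V1" using xT TV by blast
          ultimately show ?thesis using cross_not_edge[OF g1 g2 d] by blast
        qed
      next
        case xF: False
        hence xS: "x \<in> S" "x \<in> V2" using x by blast+
        show ?thesis
        proof (cases "y \<in> T")
          case True
          hence "y \<in> V1" using TV by blast
          hence "{y,x} \<notin> E1 \<union> E2" using cross_not_edge[OF g1 g2 d] xS by blast
          then show ?thesis by (simp add: insert_commute)
        next
          case False
          hence "y \<in> S" using y by blast
          then show ?thesis using xS Sst by blast
        qed
      qed
    qed
    moreover have "S \<subseteq> T \<union> (S \<inter> V2)" using T SV by blast
    ultimately have "T \<union> (S \<inter> V2) = S" using m unfolding maximal_stable_set_def by blast
    thus "T = S \<inter> V1" using TV d by blast
  qed
  ultimately show ?thesis unfolding maximal_stable_set_def by blast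
qed

lemma union_strong:
  assumes g1: "graph V1 E1" and g2: "graph V2 E2" and d: "V1 \<inter> V2 = {}"
    and c: "strong_clique V1 E1 C"
  shows "strong_clique (V1 \<union> V2) (E1 \<union> E2) C"
  unfolding strong_clique_def
proof (intro conjI allI impI)
  show "clique (V1 \<union> V2) (E1 \<union> E2) C" using c unfolding strong_clique_def clique_def by blast
  fix S assume "maximal_stable_set (V1 \<union> V2) (E1 \<union> E2) S"
  hence "maximal_stable_set V1 E1 (S \<inter> V1)" by (rule union_max[OF g1 g2 d])
  hence "C \<inter> (S \<inter> V1) \<noteq> {}" using c unfolding strong_clique_def by blast
  thus "C \<inter> S \<noteq> {}" by blast
qed

lemma join_sym: "join_edges V2 E2 V1 E1 = join_edges V1 E1 V2 E2"
proof -
  have "{{u, v} |u v. u \<in> V2 \<and> v \<in> V1} = {{u, v} |u v. u \<in> V1 \<and> v \<in> V2}"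
  proof (intro equalityI subsetI)
    fix e assume "e \<in> {{u, v} |u v. u \<in> V2 \<and> v \<in> V1}"
    then obtain u v where "e = {u,v}" "u \<in> V2" "v \<in> V1" by blast
    moreover have "{u,v} = {v,u}" by (rule insert_commute)
    ultimately show "e \<in> {{u, v} |u v. u \<in> V1 \<and> v \<in> V2}" by blast
  next
    fix e assume "e \<in> {{u, v} |u v. u \<in> V1 \<and> v \<in> V2}"
    then obtain u v where "e = {u,v}" "u \<in> V1" "v \<in> V2" by blast
    moreover have "{u,v} = {v,u}" by (rule insert_commute)
    ultimately show "e \<in> {{u, v} |u v. u \<in> V2 \<and> v \<in> V1}" by blast
  qed
  thus ?thesis unfolding join_edges_def by (simp add: Un_ac)
qed

lemma join_max:
  assumes g1: "graph V1 E1" and g2: "graph V2 E2" and d: "V1 \<inter> V2 = {}"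
    and m: "maximal_stable_set (V1 \<union> V2) (join_edges V1 E1 V2 E2) S"
    and sub: "S \<subseteq> V1"
  shows "maximal_stable_set V1 E1 S"
proof -
  have st: "stable_set (V1 \<union> V2) (join_edges V1 E1 V2 E2) S"
    and mx: "\<And>T. stable_set (V1 \<union> V2) (join_edges V1 E1 V2 E2) T \<Longrightarrow> S \<subseteq> T \<Longrightarrow> T = S"
    using m unfolding maximal_stable_set_def by auto
  have Sst: "\<And>x y. x \<in> S \<Longrightarrow> y \<in> S \<Longrightarrow> {x,y} \<notin> join_edges V1 E1 V2 E2"
    using st unfolding stable_set_def by auto
  have sub1: "\<And>e. e \<in> E1 \<Longrightarrow> e \<in> join_edges V1 E1 V2 E2" unfolding join_edges_def by simp
  have "stable_set V1 E1 S" unfolding stable_set_def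
  proof (intro conjI ballI)
    show "S \<subseteq> V1" by (rule sub)
    fix x y assume "x \<in> S" "y \<in> S"
    thus "{x,y} \<notin> E1" using Sst sub1 by blast
  qed
  moreover have "\<forall>T. stable_set V1 E1 T \<and> S \<subseteq> T \<longrightarrow> T = S"
  proof (intro allI impI)
    fix T assume T: "stable_set V1 E1 T \<and> S \<subseteq> T"
    have TV: "T \<subseteq> V1" and Tst: "\<And>x y. x \<in> T \<Longrightarrow> y \<in> T \<Longrightarrow> {x,y} \<notin> E1"
      using T unfolding stable_set_def by auto
    have "stable_set (V1 \<union> V2) (join_edges V1 E1 V2 E2) T"
      unfolding stable_set_def
    proof (intro conjI ballI)
      show "T \<subseteq> V1 \<union> V2" using TV by blast
      fix x y assume x: "x \<in> T" and y: "y \<in> T"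
      have n1: "{x,y} \<notin> E1" using Tst x y by blast
      have n2: "{x,y} \<notin> E2"
      proof
        assume "{x,y} \<in> E2"
        hence "x \<in> V2" using edge_sub[OF g2] by blast
        thus False using x TV d by blast
      qed
      have n3: "{x,y} \<notin> {{u, v} |u v. u \<in> V1 \<and> v \<in> V2}"
      proof
        assume "{x,y} \<in> {{u, v} |u v. u \<in> V1 \<and> v \<in> V2}"
        then obtain u v where uv: "{x,y} = {u,v}" "v \<in> V2" by blast
        have "v \<in> {x,y}" using uv(1) by simp
        hence "v \<in> T" using x y by blast
        thus False using uv(2) TV d by blast
      qed
      show "{x, y} \<notin> join_edges V1 E1 V2 E2" using n1 n2 n3 unfolding join_edges_def by simp
    qed
    thus "T = S" using T mx by blast
  qed
  ultimately show ?thesis unfolding maximal_stable_set_def by blast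
qed

lemma join_stable_side:
  assumes d: "V1 \<inter> V2 = {}"
    and st: "stable_set (V1 \<union> V2) (join_edges V1 E1 V2 E2) S"
  shows "S \<subseteq> V1 \<or> S \<subseteq> V2"
proof (rule ccontr)
  assume "\<not> (S \<subseteq> V1 \<or> S \<subseteq> V2)"
  then obtain a b where ab: "a \<in> S" "a \<notin> V1" "b \<in> S" "b \<notin> V2" by blast
  have SV: "S \<subseteq> V1 \<union> V2" and Sst: "\<And>x y. x \<in> S \<Longrightarrow> y \<in> S \<Longrightarrow> {x,y} \<notin> join_edges V1 E1 V2 E2"
    using st unfolding stable_set_def by auto
  have "a \<in> V2" "b \<in> V1" using ab SV by blast+
  hence "{b,a} \<in> {{u, v} |u v. u \<in> V1 \<and> v \<in> V2}" by blast
  hence "{b,a} \<in> join_edges V1 E1 V2 E2" unfolding join_edges_def by simp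
  thus False using Sst ab by blast
qed

lemma join_strong:
  assumes g1: "graph V1 E1" and g2: "graph V2 E2" and d: "V1 \<inter> V2 = {}"
    and c1: "strong_clique V1 E1 C1" and c2: "strong_clique V2 E2 C2"
  shows "strong_clique (V1 \<union> V2) (join_edges V1 E1 V2 E2) (C1 \<union> C2)"
  unfolding strong_clique_def
proof (intro conjI allI impI)
  have cl1: "clique V1 E1 C1" and cl2: "clique V2 E2 C2"
    using c1 c2 unfolding strong_clique_def by blast+
  show "clique (V1 \<union> V2) (join_edges V1 E1 V2 E2) (C1 \<union> C2)"
    unfolding clique_def
  proof (intro conjI ballI impI)
    show "C1 \<union> C2 \<subseteq> V1 \<union> V2" using cl1 cl2 unfolding clique_def by blast
    fix u v assume u: "u \<in> C1 \<union> C2" and v: "v \<in> C1 \<union> C2" and n: "u \<noteq> v"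
    have s1: "C1 \<subseteq> V1" and s2: "C2 \<subseteq> V2" using cl1 cl2 unfolding clique_def by blast+
    have e1: "{x,y} \<in> E1" if "x \<in> C1" "y \<in> C1" "x \<noteq> y" for x y
      using cl1 that unfolding clique_def by blast
    have e2: "{x,y} \<in> E2" if "x \<in> C2" "y \<in> C2" "x \<noteq> y" for x y
      using cl2 that unfolding clique_def by blast
    have "{u, v} \<in> E1 \<or> {u, v} \<in> E2 \<or> {u,v} \<in> {{a, b} |a b. a \<in> V1 \<and> b \<in> V2}"
    proof (cases "u \<in> C1")
      case uC: True
      show ?thesis
      proof (cases "v \<in> C1")
        case True then show ?thesis using uC e1 n by blast
      next
        case False
        hence "v \<in> V2" using v s2 by blast
        moreover have "u \<in> V1" using uC s1 by blast
        ultimately show ?thesis by blast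
      qed
    next
      case uF: False
      hence uC: "u \<in> C2" using u by blast
      show ?thesis
      proof (cases "v \<in> C1")
        case True
        hence "v \<in> V1" using s1 by blast
        moreover have "u \<in> V2" using uC s2 by blast
        moreover have "{u,v} = {v,u}" by (rule insert_commute)
        ultimately show ?thesis by blast
      next
        case False
        hence "v \<in> C2" using v by blast
        then show ?thesis using uC e2 n by blast
      qed
    qed
    thus "{u, v} \<in> join_edges V1 E1 V2 E2" unfolding join_edges_def by blast
  qed
  fix S assume m: "maximal_stable_set (V1 \<union> V2) (join_edges V1 E1 V2 E2) S"
  have st: "stable_set (V1 \<union> V2) (join_edges V1 E1 V2 E2) S" using m unfolding maximal_stable_set_def by blast
  from join_stable_side[OF d st] show "(C1 \<union> C2) \<inter> S \<noteq> {}"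
  proof
    assume "S \<subseteq> V1"
    hence "maximal_stable_set V1 E1 S" using join_max[OF g1 g2 d m] by blast
    thus ?thesis using c1 unfolding strong_clique_def by blast
  next
    assume "S \<subseteq> V2"
    moreover have "maximal_stable_set (V2 \<union> V1) (join_edges V2 E2 V1 E1) S"
      using m by (simp add: join_sym Un_commute)
    ultimately have "maximal_stable_set V2 E2 S" using join_max[OF g2 g1 _] d by blast
    thus ?thesis using c2 unfolding strong_clique_def by blast
  qed
qed

theorem proposition15:
  assumes "graph V1 E1" and "graph V2 E2" and "V1 \<inter> V2 = {}"
    and "semi_weakly_CIS V1 E1" and "semi_weakly_CIS V2 E2"
  shows "semi_weakly_CIS (V1 \<union> V2) (E1 \<union> E2) \<and>
    semi_weakly_CIS (V1 \<union> V2) (join_edges V1 E1 V2 E2)"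
proof
  note g1 = assms(1) and g2 = assms(2) and d = assms(3)
  have d': "V2 \<inter> V1 = {}" using d by blast
  obtain F1 where F1: "\<forall>C\<in>F1. strong_clique V1 E1 C"
     "\<forall>u v. {u, v} \<in> E1 \<longrightarrow> (\<exists>C\<in>F1. u \<in> C \<and> v \<in> C)"
    using assms(4) unfolding semi_weakly_CIS_def by blast
  obtain F2 where F2: "\<forall>C\<in>F2. strong_clique V2 E2 C"
     "\<forall>u v. {u, v} \<in> E2 \<longrightarrow> (\<exists>C\<in>F2. u \<in> C \<and> v \<in> C)"
    using assms(5) unfolding semi_weakly_CIS_def by blast
  show "semi_weakly_CIS (V1 \<union> V2) (E1 \<union> E2)"
    unfolding semi_weakly_CIS_def
  proof (intro exI[of _ "F1 \<union> F2"] conjI)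
    show "\<forall>C\<in>F1 \<union> F2. strong_clique (V1 \<union> V2) (E1 \<union> E2) C"
    proof
      fix C assume "C \<in> F1 \<union> F2"
      then show "strong_clique (V1 \<union> V2) (E1 \<union> E2) C"
      proof
        assume "C \<in> F1"
        thus ?thesis using F1(1) union_strong[OF g1 g2 d] by blast
      next
        assume "C \<in> F2"
        hence "strong_clique (V2 \<union> V1) (E2 \<union> E1) C" using F2(1) union_strong[OF g2 g1 d'] by blast
        thus ?thesis by (simp add: Un_commute)
      qed
    qed
    show "\<forall>u v. {u, v} \<in> E1 \<union> E2 \<longrightarrow> (\<exists>C\<in>F1 \<union> F2. u \<in> C \<and> v \<in> C)"
    proof (intro allI impI)
      fix u v assume "{u, v} \<in> E1 \<union> E2"
      then show "\<exists>C\<in>F1 \<union> F2. u \<in> C \<and> v \<in> C"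
      proof
        assume "{u, v} \<in> E1"
        then obtain C where "C \<in> F1" "u \<in> C" "v \<in> C" using F1(2) by blast
        thus ?thesis by blast
      next
        assume "{u, v} \<in> E2"
        then obtain C where "C \<in> F2" "u \<in> C" "v \<in> C" using F2(2) by blast
        thus ?thesis by blast
      qed
    qed
  qed
  show "semi_weakly_CIS (V1 \<union> V2) (join_edges V1 E1 V2 E2)"
  proof (cases "V1 = {} \<or> V2 = {}")
    case True
    then show ?thesis
    proof
      assume e: "V1 = {}"
      have "E1 = {}"
      proof (rule ccontr)
        assume "E1 \<noteq> {}"
        then obtain x where "x \<in> E1" by blast
        hence "card x = 2" "x \<subseteq> V1" using g1 unfolding graph_def by blast+
        thus False using e by simp
      qed
      moreover have "{{u, v} |u v. u \<in> V1 \<and> v \<in> V2} = {}" using e by simp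
      ultimately have "join_edges V1 E1 V2 E2 = E2" unfolding join_edges_def by (simp only: Un_empty_left Un_empty_right)
      thus ?thesis using e assms(5) by simp
    next
      assume e: "V2 = {}"
      have "E2 = {}"
      proof (rule ccontr)
        assume "E2 \<noteq> {}"
        then obtain x where "x \<in> E2" by blast
        hence "card x = 2" "x \<subseteq> V2" using g2 unfolding graph_def by blast+
        thus False using e by simp
      qed
      moreover have "{{u, v} |u v. u \<in> V1 \<and> v \<in> V2} = {}" using e by simp
      ultimately have "join_edges V1 E1 V2 E2 = E1" unfolding join_edges_def by (simp only: Un_empty_left Un_empty_right)
      thus ?thesis using e assms(4) by simp
    qed
  next
    case False
    then obtain a b where a: "a \<in> V1" and b: "b \<in> V2" by blast
    define F where "F = {C1 \<union> C2 | C1 C2. strong_clique V1 E1 C1 \<and> strong_clique V2 E2 C2}"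
    have Fmem: "C1 \<union> C2 \<in> F" if "strong_clique V1 E1 C1" "strong_clique V2 E2 C2" for C1 C2
      unfolding F_def using that by blast
    show ?thesis unfolding semi_weakly_CIS_def
    proof (intro exI[of _ F] conjI)
      show "\<forall>C\<in>F. strong_clique (V1 \<union> V2) (join_edges V1 E1 V2 E2) C"
      proof
        fix C assume "C \<in> F"
        then obtain C1 C2 where "C = C1 \<union> C2" "strong_clique V1 E1 C1" "strong_clique V2 E2 C2"
          unfolding F_def by blast
        thus "strong_clique (V1 \<union> V2) (join_edges V1 E1 V2 E2) C" using join_strong[OF g1 g2 d] by simp
      qed
      show "\<forall>u v. {u, v} \<in> join_edges V1 E1 V2 E2 \<longrightarrow> (\<exists>C\<in>F. u \<in> C \<and> v \<in> C)"
      proof (intro allI impI)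
        fix u v assume e: "{u, v} \<in> join_edges V1 E1 V2 E2"
        obtain Da where Da: "strong_clique V1 E1 Da" using vertex_strong[OF g1 assms(4) a] by blast
        obtain Db where Db: "strong_clique V2 E2 Db" using vertex_strong[OF g2 assms(5) b] by blast
        consider "{u,v} \<in> E1" | "{u,v} \<in> E2" | "{u,v} \<in> {{x, y} |x y. x \<in> V1 \<and> y \<in> V2}"
          using e unfolding join_edges_def Un_iff by (elim disjE) assumption+
        then show "\<exists>C\<in>F. u \<in> C \<and> v \<in> C"
        proof cases
          case 1
          then obtain C where C: "C \<in> F1" "u \<in> C" "v \<in> C" using F1(2) by blast
          have "C \<union> Db \<in> F" using F1(1) C(1) Db by (intro Fmem) simp_all
          moreover have "u \<in> C \<union> Db \<and> v \<in> C \<union> Db" using C by simp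
          ultimately show ?thesis by (rule bexI[rotated])
        next
          case 2
          then obtain C where C: "C \<in> F2" "u \<in> C" "v \<in> C" using F2(2) by blast
          have "Da \<union> C \<in> F" using F2(1) C(1) Da by (intro Fmem) simp_all
          moreover have "u \<in> Da \<union> C \<and> v \<in> Da \<union> C" using C by simp
          ultimately show ?thesis by (rule bexI[rotated])
        next
          case 3
          then obtain x y where xy: "{u,v} = {x,y}" "x \<in> V1" "y \<in> V2" by blast
          obtain Cx where Cx: "strong_clique V1 E1 Cx" "x \<in> Cx"
            using vertex_strong[OF g1 assms(4) xy(2)] by blast
          obtain Cy where Cy: "strong_clique V2 E2 Cy" "y \<in> Cy"
            using vertex_strong[OF g2 assms(5) xy(3)] by blast
          have "Cx \<union> Cy \<in> F" using Cx Cy by (intro Fmem) simp_all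
          moreover have "u \<in> {x,y}" "v \<in> {x,y}" by (simp_all add: xy(1)[symmetric])
          hence "u \<in> Cx \<union> Cy \<and> v \<in> Cx \<union> Cy" using Cx Cy by auto
          ultimately show ?thesis by (rule bexI[rotated])
        qed
      qed
    qed
  qed
qed

end
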